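(* The equation \[ V=1+\frac{y}{x}-\frac{1}{x}V-V_x-\frac{1}{x}V_y+\frac{1}{x}\log V \] has one and only one solution $V$ in the ring $A$ (with $V\in U$, so that $\log V$ is defined).
   Context: Let $A$ be the ring of formal series $a=\sum_{n=0}^\infty \frac{q_n(y)}{x^n}$, where each $q_n$ is a polynomial with complex coefficients of degree at most $n$ (so $q_0$ is a constant), with the obvious addition and multiplication (equivalently $A\cong\mathbb{C}[[X,Y]]$ via $X\mapsto x^{-1}$, $Y\mapsto y x^{-1}$). For nonzero $a$ let $\deg(a)$ be the least $n$ with $q_n\neq0$, $\deg(0)=\infty$, and give $A$ the complete metric induced by $\|a\|=2^{-\deg(a)}$. Formal derivatives: $a_x=-\sum_{n\ge1}\frac{n q_n(y)}{x^{n+1}}$, $a_y=\sum_{n\ge1}\frac{q_n'(y)}{x^n}$. Let $U\subset A$ be the set of elements with $q_0=1$; for $1+u\in U$ define $\log(1+u)=\sum_{k\ge1}(-1)^{k+1}\frac{u^k}{k}$ (convergent in $A$). *)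

theory Defs
  imports Complex_Main
begin

text \<open>An element a = sum_n q_n(y)/x^n of the ring A is represented by its coefficient
  array c, where c n k is the coefficient of y^k in q_n (i.e. of y^k x^(-n)).\<close>

type_synonym ser = "nat \<Rightarrow> nat \<Rightarrow> complex"

definition inA :: "ser \<Rightarrow> bool" where
  "inA a \<longleftrightarrow> (\<forall>n k. n < k \<longrightarrow> a n k = 0)"

definition one_A :: ser where
  "one_A = (\<lambda>n k. if n = 0 \<and> k = 0 then 1 else 0)"

definition add_A :: "ser \<Rightarrow> ser \<Rightarrow> ser" where
  "add_A a b = (\<lambda>n k. a n k + b n k)"

definition sub_A :: "ser \<Rightarrow> ser \<Rightarrow> ser" where
  "sub_A a b = (\<lambda>n k. a n k - b n k)"

definition smult_A :: "complex \<Rightarrow> ser \<Rightarrow> ser" where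
  "smult_A c a = (\<lambda>n k. c * a n k)"

definition mult_A :: "ser \<Rightarrow> ser \<Rightarrow> ser" where
  "mult_A a b = (\<lambda>n k. \<Sum>i\<le>n. \<Sum>j\<le>k. a i j * b (n - i) (k - j))"

fun pow_A :: "ser \<Rightarrow> nat \<Rightarrow> ser" where
  "pow_A a 0 = one_A"
| "pow_A a (Suc m) = mult_A a (pow_A a m)"

definition divx_A :: "ser \<Rightarrow> ser" where
  "divx_A a = (\<lambda>n k. if n = 0 then 0 else a (n - 1) k)"

definition yx_A :: ser where
  "yx_A = (\<lambda>n k. if n = 1 \<and> k = 1 then 1 else 0)"

text \<open>Formal derivative a_x = - sum_(n\<ge>1) n q_n(y) / x^(n+1).\<close>
definition dx_A :: "ser \<Rightarrow> ser" where
  "dx_A a = (\<lambda>n k. if n = 0 then 0 else - of_nat (n - 1) * a (n - 1) k)"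

definition dy_A :: "ser \<Rightarrow> ser" where
  "dy_A a = (\<lambda>n k. of_nat (k + 1) * a n (k + 1))"

text \<open>deg(a) \<ge> n+1, i.e. q_0 = ... = q_n = 0; so dist(a,b) \<le> 2^(-(n+1)) iff
  agree_upto n a b.\<close>
definition agree_upto :: "nat \<Rightarrow> ser \<Rightarrow> ser \<Rightarrow> bool" where
  "agree_upto n a b \<longleftrightarrow> (\<forall>i\<le>n. \<forall>k. a i k = b i k)"

text \<open>Convergence of a sequence in the metric ||a|| = 2^(-deg a).\<close>
definition conv_A :: "(nat \<Rightarrow> ser) \<Rightarrow> ser \<Rightarrow> bool" where
  "conv_A S L \<longleftrightarrow> (\<forall>n. \<exists>N0. \<forall>N\<ge>N0. agree_upto n (S N) L)"

text \<open>Partial sums of log(1+u) = sum_(k\<ge>1) (-1)^(k+1) u^k / k, with u = V - 1.\<close>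
definition log_partial :: "ser \<Rightarrow> nat \<Rightarrow> ser" where
  "log_partial V N = (\<lambda>n j. \<Sum>k\<in>{1..N}.
      ((-1) ^ (k + 1) / of_nat k) * pow_A (sub_A V one_A) k n j)"

definition log_A :: "ser \<Rightarrow> ser" where
  "log_A V = (THE L. conv_A (log_partial V) L)"

definition inU :: "ser \<Rightarrow> bool" where
  "inU a \<longleftrightarrow> inA a \<and> a 0 0 = 1"

end

theory Submission
  imports Defs
begin

definition FF :: "ser \<Rightarrow> ser" where
  "FF V = add_A (sub_A (sub_A (sub_A (add_A one_A yx_A) (divx_A V)) (dx_A V)) (divx_A (dy_A V)))
              (divx_A (log_A V))"

definition lev0 :: "ser \<Rightarrow> bool" where
  "lev0 V \<longleftrightarrow> (\<forall>k. V 0 k = one_A 0 k)"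

lemma agree_mono: "agree_upto n a b \<Longrightarrow> m \<le> n \<Longrightarrow> agree_upto m a b"
  unfolding agree_upto_def by auto

lemma agree_trans: "agree_upto n a b \<Longrightarrow> agree_upto n b c \<Longrightarrow> agree_upto n a c"
  unfolding agree_upto_def by auto

lemma mult_agree:
  assumes "agree_upto n a b" "agree_upto n c d"
  shows "agree_upto n (mult_A a c) (mult_A b d)"
  unfolding agree_upto_def mult_A_def
proof (intro allI impI)
  fix i k assume i: "i \<le> n"
  show "(\<Sum>i'\<le>i. \<Sum>j\<le>k. a i' j * c (i - i') (k - j)) = (\<Sum>i'\<le>i. \<Sum>j\<le>k. b i' j * d (i - i') (k - j))"
    using assms i unfolding agree_upto_def by (intro sum.cong refl) auto
qed

lemma pow_agree: assumes "agree_upto n a b" shows "agree_upto n (pow_A a j) (pow_A b j)"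
proof (induction j)
  case 0 show ?case by (simp add: agree_upto_def)
next
  case (Suc j) then show ?case using mult_agree[OF assms Suc.IH] by simp
qed

lemma pow_zero:
  assumes "\<forall>k. a 0 k = 0"
  shows "m < j \<Longrightarrow> pow_A a j m k = 0"
proof (induction j arbitrary: m k)
  case 0 then show ?case by simp
next
  case (Suc j)
  have h: "\<And>i l. i \<le> m \<Longrightarrow> a i l * pow_A a j (m - i) (k - l) = 0"
  proof -
    fix i l assume im: "i \<le> m"
    show "a i l * pow_A a j (m - i) (k - l) = 0"
    proof (cases "i = 0")
      case True then show ?thesis using assms by simp
    next
      case False then have "m - i < j" using Suc.prems im by linarith
      then show ?thesis using Suc.IH by simp
    qed
  qed
  show ?case unfolding pow_A.simps mult_A_def by (auto intro!: sum.neutral h)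
qed

lemma mult_inA: "inA a \<Longrightarrow> inA b \<Longrightarrow> inA (mult_A a b)"
  unfolding inA_def mult_A_def
proof (intro allI impI)
  fix n k :: nat assume a: "\<forall>n k. n < k \<longrightarrow> a n k = 0" and b: "\<forall>n k. n < k \<longrightarrow> b n k = 0" and nk: "n < k"
  have h: "\<And>(i::nat) (j::nat). i \<le> n \<Longrightarrow> j \<le> k \<Longrightarrow> a i j * b (n - i) (k - j) = 0"
  proof -
    fix i j :: nat assume "i \<le> n" "j \<le> k"
    then have "i < j \<or> n - i < k - j" using nk by linarith
    then show "a i j * b (n - i) (k - j) = 0" using a b by auto
  qed
  show "(\<Sum>i\<le>n. \<Sum>j\<le>k. a i j * b (n - i) (k - j)) = 0" by (auto intro!: sum.neutral h)
qed

lemma one_inA: "inA one_A" unfolding inA_def one_A_def by auto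

lemma pow_inA: "inA a \<Longrightarrow> inA (pow_A a j)"
  by (induction j) (auto simp: one_inA mult_inA)

lemma sub_inA: "inA a \<Longrightarrow> inA b \<Longrightarrow> inA (sub_A a b)"
  unfolding inA_def sub_A_def by auto

lemma lev0_sub: "lev0 V \<Longrightarrow> \<forall>k. sub_A V one_A 0 k = 0"
  unfolding lev0_def sub_A_def by auto

lemma log_partial_stable:
  assumes "lev0 V" "i < N"
  shows "log_partial V N i k = log_partial V (Suc i) i k"
  unfolding log_partial_def
proof (rule sum.mono_neutral_right)
  show "finite {1..N}" by simp
  show "{1..Suc i} \<subseteq> {1..N}" using assms by auto
  show "\<forall>j\<in>{1..N} - {1..Suc i}. (- 1) ^ (j + 1) / of_nat j * pow_A (sub_A V one_A) j i k = 0"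
    using pow_zero[of "sub_A V one_A", OF lev0_sub[OF assms(1)]] by auto
qed

lemma log_eq:
  assumes "lev0 V"
  shows "log_A V = (\<lambda>n k. log_partial V (Suc n) n k)"
proof -
  let ?L = "(\<lambda>n k. log_partial V (Suc n) n k)"
  have c: "conv_A (log_partial V) ?L"
    unfolding conv_A_def agree_upto_def
  proof
    fix n
    show "\<exists>N0. \<forall>N\<ge>N0. \<forall>i\<le>n. \<forall>k. log_partial V N i k = ?L i k"
    proof (intro exI[of _ "Suc n"] allI impI)
      fix N i k assume "Suc n \<le> N" "i \<le> n"
      then show "log_partial V N i k = ?L i k" by (intro log_partial_stable[OF assms]) simp
    qed
  qed
  have u: "L = ?L" if hL: "conv_A (log_partial V) L" for L
  proof (rule ext, rule ext)
    fix n k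
    obtain N1 where N1: "\<forall>N\<ge>N1. agree_upto n (log_partial V N) L" using hL unfolding conv_A_def by blast
    obtain N2 where N2: "\<forall>N\<ge>N2. agree_upto n (log_partial V N) ?L" using c unfolding conv_A_def by blast
    have "agree_upto n (log_partial V (max N1 N2)) L" "agree_upto n (log_partial V (max N1 N2)) ?L"
      using N1 N2 by auto
    then have "log_partial V (max N1 N2) n k = L n k" "log_partial V (max N1 N2) n k = ?L n k"
      unfolding agree_upto_def by auto
    then show "L n k = ?L n k" by simp
  qed
  show ?thesis unfolding log_A_def using c u by (rule the_equality)
qed

lemma log_agree:
  assumes "lev0 V" "lev0 W" "agree_upto n V W"
  shows "agree_upto n (log_A V) (log_A W)"
proof -
  have sa: "agree_upto n (sub_A V one_A) (sub_A W one_A)"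
    using assms(3) unfolding agree_upto_def sub_A_def by auto
  show ?thesis
    unfolding log_eq[OF assms(1)] log_eq[OF assms(2)] agree_upto_def log_partial_def
    using pow_agree[OF sa] unfolding agree_upto_def by (auto intro!: sum.cong)
qed

lemma lev0_FF: "lev0 (FF V)"
  unfolding lev0_def FF_def add_A_def sub_A_def divx_A_def dx_A_def yx_A_def by simp

lemma FF_contract:
  assumes "lev0 V" "lev0 W" "agree_upto n V W"
  shows "agree_upto (Suc n) (FF V) (FF W)"
proof -
  have l: "agree_upto n (log_A V) (log_A W)" by (rule log_agree[OF assms])
  show ?thesis
    unfolding agree_upto_def
  proof (intro allI impI)
    fix i k assume i: "i \<le> Suc n"
    show "FF V i k = FF W i k"
    proof (cases i)
      case 0 then show ?thesis using lev0_FF[of V] lev0_FF[of W] unfolding lev0_def by simp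
    next
      case (Suc m)
      then have "m \<le> n" using i by simp
      then show ?thesis using assms(3) l Suc unfolding agree_upto_def FF_def add_A_def sub_A_def divx_A_def dx_A_def dy_A_def
        by simp
    qed
  qed
qed

lemma log_inA:
  assumes "inA V" "lev0 V"
  shows "inA (log_A V)"
proof -
  have p: "inA (pow_A (sub_A V one_A) j)" for j
    by (rule pow_inA, rule sub_inA[OF assms(1) one_inA])
  show ?thesis unfolding log_eq[OF assms(2)] inA_def log_partial_def
    using p unfolding inA_def by (auto intro!: sum.neutral)
qed

lemma FF_inA:
  assumes "inA V" "lev0 V"
  shows "inA (FF V)"
proof -
  have l: "inA (log_A V)" by (rule log_inA[OF assms])
  show ?thesis unfolding inA_def
  proof (intro allI impI)
    fix n k :: nat assume nk: "n < k"
    show "FF V n k = 0"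
    proof (cases n)
      case 0 then show ?thesis using nk unfolding FF_def add_A_def sub_A_def divx_A_def dx_A_def yx_A_def one_A_def by simp
    next
      case (Suc m)
      then have "m < k" "m < k + 1" using nk by auto
      have z1: "V m k = 0" "V m (k + 1) = 0" "log_A V m k = 0"
        using \<open>m < k\<close> \<open>m < k + 1\<close> assms(1) l unfolding inA_def by blast+
      have z2: "one_A (Suc m) k = 0" "yx_A (Suc m) k = 0"
        using nk Suc unfolding one_A_def yx_A_def by auto
      show ?thesis unfolding Suc FF_def add_A_def sub_A_def divx_A_def dx_A_def dy_A_def
        using z1 z2 by simp
    qed
  qed
qed

lemma inU_lev0: "inU V \<Longrightarrow> lev0 V"
  unfolding inU_def lev0_def inA_def one_A_def by auto

lemma lev0_agree0: "lev0 V \<Longrightarrow> lev0 W \<Longrightarrow> agree_upto 0 V W"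
  unfolding lev0_def agree_upto_def by auto

lemma fix_unique:
  assumes "lev0 V" "lev0 W" "V = FF V" "W = FF W"
  shows "V = W"
proof -
  have "agree_upto n V W" for n
  proof (induction n)
    case 0 show ?case by (rule lev0_agree0[OF assms(1,2)])
  next
    case (Suc n)
    have "agree_upto (Suc n) (FF V) (FF W)" using FF_contract[OF assms(1,2) Suc] .
    then show ?case by (simp only: assms(3)[symmetric] assms(4)[symmetric])
  qed
  then show ?thesis unfolding agree_upto_def by (intro ext) blast
qed

theorem theorem4p1:
  shows "\<exists>!V. inU V \<and>
    V = add_A (sub_A (sub_A (sub_A (add_A one_A yx_A) (divx_A V)) (dx_A V)) (divx_A (dy_A V)))
              (divx_A (log_A V))"
proof -
  define W where "W m = (FF ^^ m) one_A" for m
  have W0: "W 0 = one_A" and WS: "W (Suc m) = FF (W m)" for m unfolding W_def by simp_all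
  have lev: "lev0 (W m)" for m
    by (cases m) (simp_all only: W0 WS lev0_FF, simp add: lev0_def)
  have inAW: "inA (W m)" for m
    by (induction m) (auto simp: W0 WS one_inA FF_inA lev)
  have chain: "agree_upto m (W m) (W (Suc m))" for m
  proof (induction m)
    case 0 show ?case using lev0_agree0[OF lev lev] .
  next
    case (Suc m) then show ?case using FF_contract[OF lev lev Suc] by (simp add: WS)
  qed
  have mono: "agree_upto i (W i) (W m)" if "i \<le> m" for i m
    using that
  proof (induction m rule: dec_induct)
    case base show ?case by (simp add: agree_upto_def)
  next
    case (step m)
    have "agree_upto i (W m) (W (Suc m))" using agree_mono[OF chain step(1)] .
    then show ?case using agree_trans[OF step(3)] by blast
  qed
  define V where "V = (\<lambda>n k. W n n k)"
  have VW: "agree_upto n V (W n)" for n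
    using mono unfolding agree_upto_def V_def by auto
  have lV: "lev0 V" using lev[of 0] unfolding lev0_def V_def by simp
  have iV: "inA V" using inAW unfolding inA_def V_def by auto
  have fV: "V = FF V"
  proof (intro ext)
    fix n k
    have "agree_upto (Suc n) (FF V) (W (Suc n))" using FF_contract[OF lV lev VW] by (simp add: WS)
    then have "FF V n k = W (Suc n) n k" unfolding agree_upto_def by simp
    also have "\<dots> = W n n k" using mono[of n "Suc n"] unfolding agree_upto_def by simp
    finally show "V n k = FF V n k" unfolding V_def by simp
  qed
  have uV: "inU V" using iV lV unfolding inU_def lev0_def one_A_def by simp
  show ?thesis
  proof (rule ex1I[of _ V])
    show "inU V \<and> V = add_A (sub_A (sub_A (sub_A (add_A one_A yx_A) (divx_A V)) (dx_A V)) (divx_A (dy_A V)))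
              (divx_A (log_A V))" using uV fV unfolding FF_def[symmetric] by blast
  next
    fix X assume "inU X \<and> X = add_A (sub_A (sub_A (sub_A (add_A one_A yx_A) (divx_A X)) (dx_A X)) (divx_A (dy_A X)))
              (divx_A (log_A X))"
    then have "inU X" "X = FF X" unfolding FF_def[symmetric] by blast+
    then show "X = V" using fix_unique[OF inU_lev0 lV _ fV] by blast
  qed
qed

end
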